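(* Let $G$ be a finitely generated group of exponential growth with finite generating set $A$, $S=A\cup A^{-1}$, and let $\psi:L\to G$, $L\subseteq S^*$, be a Cayley automatic representation of $G$. Then there exist constants $\lambda_1,\lambda_2>0$ such that, with $B_n=\{g\in G: d_A(g)\le n\}$ and $Q_n=\{g\in B_n : \lambda_1 d_A(g)\le|\psi^{-1}(g)|\le\lambda_2 d_A(g)\}$, one has $\lim_{n\to\infty}\#Q_n/\#B_n=1$. Moreover, for every $g\in Q_n$, writing $w=\psi^{-1}(g)$, $d_A(\pi(w),\psi(w))\le(1+1/\lambda_1)|w|$.
   Context: $\pi:S^*\to G$ is the evaluation map and $d_A$ the word metric of $\Gamma(G,A)$, $d_A(g)=d_A(e,g)$. Exponential growth means there is $\lambda>1$ with $\#B_n\ge\lambda^n$ for all large $n$. A Cayley automatic representation is a bijection $\psi:L\to G$ from a regular $L\subseteq S^*$ such that for each $a\in A$ the relation $\{(\psi^{-1}(g),\psi^{-1}(ga)) : g\in G\}$ is FA-recognizable (the language of convolutions — parallel readings of the two strings with the shorter padded by a new symbol — is regular). *)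

theory Defs
  imports "HOL-Algebra.Generated_Groups" Complex_Main
begin

definition regular_lang :: "'b set \<Rightarrow> 'b list set \<Rightarrow> bool" where
  "regular_lang Alph L \<longleftrightarrow> finite Alph \<and> L \<subseteq> lists Alph \<and>
     (\<exists>(Q::nat set) q0 F \<delta>. finite Q \<and> q0 \<in> Q \<and> F \<subseteq> Q \<and>
        (\<forall>q\<in>Q. \<forall>x\<in>Alph. \<delta> q x \<in> Q) \<and>
        L = {w \<in> lists Alph. foldl \<delta> q0 w \<in> F})"

(* convolution of two strings: read in parallel, shorter one padded by None *)
fun conv :: "'b list \<Rightarrow> 'b list \<Rightarrow> ('b option \<times> 'b option) list" where
  "conv [] [] = []"
| "conv (x # xs) [] = (Some x, None) # conv xs []"
| "conv [] (y # ys) = (None, Some y) # conv [] ys"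
| "conv (x # xs) (y # ys) = (Some x, Some y) # conv xs ys"

definition pad_alph :: "'b set \<Rightarrow> ('b option \<times> 'b option) set" where
  "pad_alph S = (insert None (Some ` S)) \<times> (insert None (Some ` S))"

definition sym_gens :: "('a, 'c) monoid_scheme \<Rightarrow> 'a set \<Rightarrow> 'a set" where
  "sym_gens G A = A \<union> (\<lambda>a. inv\<^bsub>G\<^esub> a) ` A"

definition evalw :: "('a, 'c) monoid_scheme \<Rightarrow> 'a list \<Rightarrow> 'a" where
  "evalw G w = foldr (\<lambda>x y. x \<otimes>\<^bsub>G\<^esub> y) w \<one>\<^bsub>G\<^esub>"

definition word_len :: "('a, 'c) monoid_scheme \<Rightarrow> 'a set \<Rightarrow> 'a \<Rightarrow> nat" where
  "word_len G A g = (LEAST n. \<exists>w \<in> lists (sym_gens G A). length w = n \<and> evalw G w = g)"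

definition word_dist :: "('a, 'c) monoid_scheme \<Rightarrow> 'a set \<Rightarrow> 'a \<Rightarrow> 'a \<Rightarrow> nat" where
  "word_dist G A g h = word_len G A (inv\<^bsub>G\<^esub> g \<otimes>\<^bsub>G\<^esub> h)"

definition ball_n :: "('a, 'c) monoid_scheme \<Rightarrow> 'a set \<Rightarrow> nat \<Rightarrow> 'a set" where
  "ball_n G A n = {g \<in> carrier G. word_len G A g \<le> n}"

definition exp_growth :: "('a, 'c) monoid_scheme \<Rightarrow> 'a set \<Rightarrow> bool" where
  "exp_growth G A \<longleftrightarrow> (\<exists>c::real. c > 1 \<and>
      (\<forall>\<^sub>F n in sequentially. real (card (ball_n G A n)) \<ge> c ^ n))"

definition cayley_automatic_rep ::
  "('a, 'c) monoid_scheme \<Rightarrow> 'a set \<Rightarrow> 'a list set \<Rightarrow> ('a list \<Rightarrow> 'a) \<Rightarrow> bool" where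
  "cayley_automatic_rep G A L \<psi> \<longleftrightarrow>
     regular_lang (sym_gens G A) L \<and> bij_betw \<psi> L (carrier G) \<and>
     (\<forall>a\<in>A. regular_lang (pad_alph (sym_gens G A))
        {conv (the_inv_into L \<psi> g) (the_inv_into L \<psi> (g \<otimes>\<^bsub>G\<^esub> a)) | g. g \<in> carrier G})"

end

theory Submission
  imports Defs
begin


lemma evalw_carrier: "group G \<Longrightarrow> set w \<subseteq> carrier G \<Longrightarrow> evalw G w \<in> carrier G"
  by (induction w) (auto simp: evalw_def intro: monoid.m_closed[OF group.is_monoid] monoid.one_closed[OF group.is_monoid])

lemma evalw_append: "group G \<Longrightarrow> set xs \<subseteq> carrier G \<Longrightarrow> set ys \<subseteq> carrier G \<Longrightarrow>
   evalw G (xs @ ys) = evalw G xs \<otimes>\<^bsub>G\<^esub> evalw G ys"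
proof (induction xs)
  case Nil then show ?case using evalw_carrier[of G ys] by (simp add: evalw_def group.is_monoid monoid.l_one)
next
  case (Cons x xs)
  then have "evalw G (x # xs @ ys) = x \<otimes>\<^bsub>G\<^esub> (evalw G xs \<otimes>\<^bsub>G\<^esub> evalw G ys)"
    by (simp add: evalw_def)
  also have "\<dots> = (x \<otimes>\<^bsub>G\<^esub> evalw G xs) \<otimes>\<^bsub>G\<^esub> evalw G ys"
    using Cons evalw_carrier[of G xs] evalw_carrier[of G ys]
    by (simp add: group.is_monoid monoid.m_assoc)
  finally show ?case by (simp add: evalw_def)
qed

lemma evalw_single: "group G \<Longrightarrow> x \<in> carrier G \<Longrightarrow> evalw G [x] = x"
  by (simp add: evalw_def group.is_monoid monoid.r_one)

lemma sym_gens_carrier: "group G \<Longrightarrow> A \<subseteq> carrier G \<Longrightarrow> sym_gens G A \<subseteq> carrier G"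
  unfolding sym_gens_def by (auto intro: group.inv_closed)

lemma sym_gens_inv: "group G \<Longrightarrow> A \<subseteq> carrier G \<Longrightarrow> s \<in> sym_gens G A \<Longrightarrow> inv\<^bsub>G\<^esub> s \<in> sym_gens G A"
  unfolding sym_gens_def using group.inv_inv by fastforce

lemma gen_word: assumes "group G" "A \<subseteq> carrier G" "g \<in> generate G A"
  shows "\<exists>w \<in> lists (sym_gens G A). evalw G w = g"
  using assms(3)
proof induction
  case one then show ?case by (rule bexI[of _ "[]"]) (auto simp: evalw_def)
next
  case (incl h) then show ?case using assms
    by (intro bexI[of _ "[h]"]) (auto simp: evalw_single sym_gens_def)
next
  case (inv h) then show ?case using assms
    by (intro bexI[of _ "[inv\<^bsub>G\<^esub> h]"]) (auto simp: evalw_single sym_gens_def intro: group.inv_closed)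
next
  case (eng h1 h2)
  then obtain w1 w2 where "w1 \<in> lists (sym_gens G A)" "w2 \<in> lists (sym_gens G A)"
    "evalw G w1 = h1" "evalw G w2 = h2" by blast
  moreover have "set w1 \<subseteq> carrier G" "set w2 \<subseteq> carrier G"
    using calculation sym_gens_carrier[OF assms(1,2)] by auto
  ultimately show ?case using assms
    by (intro bexI[of _ "w1 @ w2"]) (auto simp: evalw_append)
qed

context
  fixes G :: "('a, 'c) monoid_scheme" and A :: "'a set"
  assumes grp: "group G" and AG: "A \<subseteq> carrier G" and gen: "generate G A = carrier G"
begin

lemma word_len_ex: assumes "g \<in> carrier G"
  shows "\<exists>w \<in> lists (sym_gens G A). length w = word_len G A g \<and> evalw G w = g"
proof -
  obtain w where "w \<in> lists (sym_gens G A)" "evalw G w = g" using gen_word[OF grp AG] gen assms by blast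
  then have "\<exists>n. \<exists>w \<in> lists (sym_gens G A). length w = n \<and> evalw G w = g" by blast
  then show ?thesis unfolding word_len_def by (rule LeastI_ex)
qed

lemma word_len_le: "w \<in> lists (sym_gens G A) \<Longrightarrow> word_len G A (evalw G w) \<le> length w"
  unfolding word_len_def by (rule Least_le) blast

lemma word_len_0: assumes "g \<in> carrier G" "word_len G A g = 0" shows "g = \<one>\<^bsub>G\<^esub>"
  using word_len_ex[OF assms(1)] assms(2) by (auto simp: evalw_def)

lemma evalw_rev_inv: "set w \<subseteq> carrier G \<Longrightarrow>
   evalw G (rev (map (\<lambda>x. inv\<^bsub>G\<^esub> x) w)) = inv\<^bsub>G\<^esub> (evalw G w)"
proof (induction w)
  case Nil then show ?case using grp by (simp add: evalw_def monoid.inv_one[OF group.is_monoid])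
next
  case (Cons x w)
  have c: "set (rev (map (\<lambda>x. inv\<^bsub>G\<^esub> x) w)) \<subseteq> carrier G" using Cons grp by (auto intro: group.inv_closed)
  have "evalw G (rev (map (\<lambda>x. inv\<^bsub>G\<^esub> x) (x # w))) = inv\<^bsub>G\<^esub> (evalw G w) \<otimes>\<^bsub>G\<^esub> inv\<^bsub>G\<^esub> x"
    using Cons c grp by (simp add: evalw_append evalw_single group.inv_closed)
  also have "\<dots> = inv\<^bsub>G\<^esub> (x \<otimes>\<^bsub>G\<^esub> evalw G w)"
    using Cons grp evalw_carrier[of G w] by (simp add: group.inv_mult_group)
  finally show ?case by (simp add: evalw_def)
qed

lemma word_len_inv: assumes "g \<in> carrier G" shows "word_len G A (inv\<^bsub>G\<^esub> g) \<le> word_len G A g"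
proof -
  obtain w where w: "w \<in> lists (sym_gens G A)" "length w = word_len G A g" "evalw G w = g"
    using word_len_ex[OF assms] by blast
  have sc: "set w \<subseteq> carrier G" using w(1) sym_gens_carrier[OF grp AG] by auto
  have "rev (map (\<lambda>x. inv\<^bsub>G\<^esub> x) w) \<in> lists (sym_gens G A)"
    using w(1) sym_gens_inv[OF grp AG] by auto
  from word_len_le[OF this] show ?thesis using evalw_rev_inv[OF sc] w by simp
qed

lemma word_len_mult: assumes "g \<in> carrier G" "h \<in> carrier G"
  shows "word_len G A (g \<otimes>\<^bsub>G\<^esub> h) \<le> word_len G A g + word_len G A h"
proof -
  obtain w where w: "w \<in> lists (sym_gens G A)" "length w = word_len G A g" "evalw G w = g"
    using word_len_ex[OF assms(1)] by blast
  obtain v where v: "v \<in> lists (sym_gens G A)" "length v = word_len G A h" "evalw G v = h"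
    using word_len_ex[OF assms(2)] by blast
  have "w @ v \<in> lists (sym_gens G A)" using w v by auto
  from word_len_le[OF this] show ?thesis using w v sym_gens_carrier[OF grp AG]
    by (subst (asm) evalw_append[OF grp]) auto
qed

end


lemma foldl_closed: "q \<in> Q \<Longrightarrow> \<forall>q\<in>Q. \<forall>x\<in>S. \<delta> q x \<in> Q \<Longrightarrow> w \<in> lists S \<Longrightarrow> foldl \<delta> q w \<in> Q"
  by (induction w arbitrary: q) auto

lemma pump:
  assumes "finite Q" "q \<in> Q" "\<forall>q\<in>Q. \<forall>x\<in>S. \<delta> q x \<in> Q" "t \<in> lists S" "card Q \<le> length t"
  shows "\<exists>i j. i < j \<and> j \<le> length t \<and> foldl \<delta> q (take i t @ drop j t) = foldl \<delta> q t"
proof -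
  define f where "f i = foldl \<delta> q (take i t)" for i
  have "f ` {0..length t} \<subseteq> Q" unfolding f_def
    using assms(2,3,4) by (auto intro!: foldl_closed[where S=S] dest: in_set_takeD)
  moreover have "card Q < card {0..length t}" using assms(5) by simp
  ultimately have "\<not> inj_on f {0..length t}"
    using card_inj_on_le[of f "{0..length t}" Q] assms(1) by fastforce
  then obtain i j where ij: "i \<le> length t" "j \<le> length t" "i \<noteq> j" "f i = f j"
    unfolding inj_on_def by auto
  have key: "foldl \<delta> q (take i t @ drop j t) = foldl \<delta> q t" if "f i = f j" "i < j" "j \<le> length t" for i j
  proof -
    have "foldl \<delta> q (take i t @ drop j t) = foldl \<delta> (f i) (drop j t)" by (simp add: f_def)
    also have "\<dots> = foldl \<delta> (f j) (drop j t)" using that by simp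
    also have "\<dots> = foldl \<delta> q (take j t @ drop j t)" by (simp only: f_def foldl_append)
    finally show ?thesis by simp
  qed
  show ?thesis
  proof (cases "i < j")
    case True then show ?thesis using key[of i j] ij by blast
  next
    case False then show ?thesis using key[of j i] ij by (metis linorder_neqE_nat)
  qed
qed

lemma conv_inj: "conv u v = conv u' v' \<Longrightarrow> u = u' \<and> v = v'"
proof (induction u v arbitrary: u' v' rule: conv.induct)
  case 1 then show ?case by (cases u'; cases v') auto
next
  case (2 x xs) then show ?case by (cases u'; cases v') auto
next
  case (3 y ys) then show ?case by (cases u'; cases v') auto
next
  case (4 x xs y ys) then show ?case by (cases u'; cases v') auto
qed

lemma conv_split_r: "length u \<le> length v \<Longrightarrow>
  conv u v = conv u (take (length u) v) @ map (\<lambda>y. (None, Some y)) (drop (length u) v)"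
proof (induction u v rule: conv.induct)
  case (3 y ys) then show ?case by (induction ys) auto
qed auto

lemma conv_swap: "conv v u = map prod.swap (conv u v)"
  by (induction u v rule: conv.induct) auto

lemma foldl_swap: "foldl (\<lambda>q x. \<delta> q (prod.swap x)) q (map prod.swap w) = foldl \<delta> q w"
  by (induction w arbitrary: q) auto

lemma foldl_swap2: "foldl (\<lambda>q x. \<delta> q (prod.swap x)) q w = foldl \<delta> q (map prod.swap w)"
  by (induction w arbitrary: q) auto

lemma pump_conv_r:
  fixes u v :: "'b list"
  assumes "finite Q" "q0 \<in> Q" "\<forall>q\<in>Q. \<forall>x\<in>S. \<delta> q x \<in> Q"
    "conv u v \<in> lists S" "foldl \<delta> q0 (conv u v) \<in> F" "length u + card Q \<le> length v"
  shows "\<exists>v'. length v' < length v \<and> conv u v' \<in> lists S \<and> foldl \<delta> q0 (conv u v') \<in> F"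
proof -
  define p where "p = conv u (take (length u) v)"
  define d where "d = drop (length u) v"
  define t where "t = (map (\<lambda>y. (None, Some y)) d :: ('b option \<times> 'b option) list)"
  have w: "conv u v = p @ t" unfolding p_def t_def d_def using conv_split_r[OF assms(6)[THEN le_trans[OF le_add1]]] by simp
  have pS: "p \<in> lists S" and tS: "t \<in> lists S" using assms(4) w by auto
  have q: "foldl \<delta> q0 p \<in> Q" using foldl_closed[OF assms(2,3) pS] .
  have "card Q \<le> length t" using assms(6) by (simp add: t_def d_def)
  from pump[OF assms(1) q assms(3) tS this] obtain i j where
    ij: "i < j" "j \<le> length t" "foldl \<delta> (foldl \<delta> q0 p) (take i t @ drop j t) = foldl \<delta> (foldl \<delta> q0 p) t"
    by blast
  define v' where "v' = take (length u) v @ take i d @ drop j d"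
  have lu: "length (take (length u) v) = length u" using assms(6) by simp
  have lv': "length u \<le> length v'" unfolding v'_def using lu by simp
  have tk: "take (length u) v' = take (length u) v" unfolding v'_def using lu by simp
  have dr: "drop (length u) v' = take i d @ drop j d" unfolding v'_def using lu by simp
  have cv: "conv u v' = p @ (take i t @ drop j t)"
    using conv_split_r[OF lv'] tk dr unfolding p_def t_def by (simp add: take_map drop_map)
  have "length v' < length v" unfolding v'_def d_def using ij(1,2) assms(6) by (simp add: t_def d_def)
  moreover have "conv u v' \<in> lists S" using cv pS tS by (auto dest: in_set_takeD in_set_dropD)
  moreover have "foldl \<delta> q0 (conv u v') \<in> F" using cv ij(3) assms(5) w by simp
  ultimately show ?thesis by blast
qed

lemma pump_conv_l:
  assumes "finite Q" "q0 \<in> Q" "\<forall>q\<in>Q. \<forall>x\<in>S. \<delta> q x \<in> Q"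
    "conv u v \<in> lists S" "foldl \<delta> q0 (conv u v) \<in> F" "length v + card Q \<le> length u"
  shows "\<exists>u'. length u' < length u \<and> conv u' v \<in> lists S \<and> foldl \<delta> q0 (conv u' v) \<in> F"
proof -
  define \<delta>' where "\<delta>' = (\<lambda>q x. \<delta> q (prod.swap x))"
  have c: "\<forall>q\<in>Q. \<forall>x\<in>prod.swap ` S. \<delta>' q x \<in> Q" using assms(3) by (auto simp: \<delta>'_def)
  have "conv v u \<in> lists (prod.swap ` S)" using assms(4) unfolding conv_swap[of v u] by auto
  moreover have "foldl \<delta>' q0 (conv v u) \<in> F" using assms(5) unfolding conv_swap[of v u] \<delta>'_def foldl_swap .
  ultimately obtain u' where "length u' < length u" "conv v u' \<in> lists (prod.swap ` S)"
      "foldl \<delta>' q0 (conv v u') \<in> F"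
    using pump_conv_r[OF assms(1,2) c _ _ assms(6)] by blast
  moreover have "conv u' v = map prod.swap (conv v u')" by (rule conv_swap)
  ultimately show ?thesis
    by (intro exI[of _ u']) (fastforce simp: \<delta>'_def foldl_swap2)
qed



lemma rep_bound:
  assumes grp: "group G" and car: "cayley_automatic_rep G A L \<psi>" and aA: "a \<in> A" and AG: "A \<subseteq> carrier G"
  shows "\<exists>N. \<forall>g\<in>carrier G.
     length (the_inv_into L \<psi> (g \<otimes>\<^bsub>G\<^esub> a)) \<le> length (the_inv_into L \<psi> g) + N \<and>
     length (the_inv_into L \<psi> g) \<le> length (the_inv_into L \<psi> (g \<otimes>\<^bsub>G\<^esub> a)) + N"
proof -
  let ?i = "the_inv_into L \<psi>"
  let ?R = "{conv (?i g) (?i (g \<otimes>\<^bsub>G\<^esub> a)) | g. g \<in> carrier G}"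
  let ?S = "pad_alph (sym_gens G A)"
  have bij: "bij_betw \<psi> L (carrier G)" using car by (simp add: cayley_automatic_rep_def)
  have inj: "inj_on ?i (carrier G)" using bij_betw_the_inv_into[OF bij] by (simp add: bij_betw_def)
  have reg: "regular_lang ?S ?R" using car aA by (simp add: cayley_automatic_rep_def)
  then obtain Q :: "nat set" and q0 F \<delta> where Q: "finite Q" "q0 \<in> Q" "\<forall>q\<in>Q. \<forall>x\<in>?S. \<delta> q x \<in> Q"
    and R: "?R = {w \<in> lists ?S. foldl \<delta> q0 w \<in> F}"
    unfolding regular_lang_def by blast
  have aG: "a \<in> carrier G" using aA AG by auto
  show ?thesis
  proof (intro exI[of _ "card Q"] ballI conjI)
    fix g assume g: "g \<in> carrier G"
    have ga: "g \<otimes>\<^bsub>G\<^esub> a \<in> carrier G" using g aG grp by (simp add: group.is_monoid monoid.m_closed)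
    have inR: "conv (?i g) (?i (g \<otimes>\<^bsub>G\<^esub> a)) \<in> ?R" using g by blast
    hence inS: "conv (?i g) (?i (g \<otimes>\<^bsub>G\<^esub> a)) \<in> lists ?S"
      and inF: "foldl \<delta> q0 (conv (?i g) (?i (g \<otimes>\<^bsub>G\<^esub> a))) \<in> F" unfolding R by auto
    show "length (?i (g \<otimes>\<^bsub>G\<^esub> a)) \<le> length (?i g) + card Q"
    proof (rule ccontr)
      assume "\<not> ?thesis"
      then have "length (?i g) + card Q \<le> length (?i (g \<otimes>\<^bsub>G\<^esub> a))" by simp
      from pump_conv_r[OF Q inS inF this] obtain v' where
        v': "length v' < length (?i (g \<otimes>\<^bsub>G\<^esub> a))" "conv (?i g) v' \<in> lists ?S"
          "foldl \<delta> q0 (conv (?i g) v') \<in> F" by blast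
      then have "conv (?i g) v' \<in> ?R" by (subst R) simp
      then have "\<exists>g1. conv (?i g) v' = conv (?i g1) (?i (g1 \<otimes>\<^bsub>G\<^esub> a)) \<and> g1 \<in> carrier G"
        by (simp only: mem_Collect_eq)
      then obtain g1 where g1c: "conv (?i g) v' = conv (?i g1) (?i (g1 \<otimes>\<^bsub>G\<^esub> a)) \<and> g1 \<in> carrier G" ..
      note g1 = conjunct2[OF g1c] conjunct1[OF g1c]
      have "?i g = ?i g1" "v' = ?i (g1 \<otimes>\<^bsub>G\<^esub> a)"
        using conv_inj[OF g1(2)] by (rule conjunct1, rule conjunct2)
      then have "g1 = g" using inj_onD[OF inj _ g g1(1)] by simp
      then show False using v'(1) \<open>v' = _\<close> by simp
    qed
    show "length (?i g) \<le> length (?i (g \<otimes>\<^bsub>G\<^esub> a)) + card Q"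
    proof (rule ccontr)
      assume "\<not> ?thesis"
      then have "length (?i (g \<otimes>\<^bsub>G\<^esub> a)) + card Q \<le> length (?i g)" by simp
      from pump_conv_l[OF Q inS inF this] obtain u' where
        u': "length u' < length (?i g)" "conv u' (?i (g \<otimes>\<^bsub>G\<^esub> a)) \<in> lists ?S"
          "foldl \<delta> q0 (conv u' (?i (g \<otimes>\<^bsub>G\<^esub> a))) \<in> F" by blast
      then have "conv u' (?i (g \<otimes>\<^bsub>G\<^esub> a)) \<in> ?R" by (subst R) simp
      then have "\<exists>g1. conv u' (?i (g \<otimes>\<^bsub>G\<^esub> a)) = conv (?i g1) (?i (g1 \<otimes>\<^bsub>G\<^esub> a)) \<and> g1 \<in> carrier G"
        by (simp only: mem_Collect_eq)
      then obtain g1 where g1c: "conv u' (?i (g \<otimes>\<^bsub>G\<^esub> a)) = conv (?i g1) (?i (g1 \<otimes>\<^bsub>G\<^esub> a)) \<and> g1 \<in> carrier G" ..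
      note g1 = conjunct2[OF g1c] conjunct1[OF g1c]
      have e: "u' = ?i g1" "?i (g \<otimes>\<^bsub>G\<^esub> a) = ?i (g1 \<otimes>\<^bsub>G\<^esub> a)"
        using conv_inj[OF g1(2)] by (rule conjunct1, rule conjunct2)
      have g1a: "g1 \<otimes>\<^bsub>G\<^esub> a \<in> carrier G" using g1(1) aG grp by (simp add: group.is_monoid monoid.m_closed)
      have "g \<otimes>\<^bsub>G\<^esub> a = g1 \<otimes>\<^bsub>G\<^esub> a" using inj_onD[OF inj e(2) ga g1a] .
      then have "g1 = g" using grp g g1(1) aG by (simp add: group.right_cancel)
      then show False using u'(1) e(1) by simp
    qed
  qed
qed



lemma sum_pow_le: "(\<Sum>i\<le>m. (s::nat)^i) \<le> (s+1)^m"
proof (induction m)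
  case 0 then show ?case by simp
next
  case (Suc m)
  have "s^m \<le> (s+1)^m" by (rule power_mono) auto
  then have h: "s * s^m \<le> s * (s+1)^m" by simp
  show ?case using add_mono[OF Suc.IH h] by simp
qed

locale cayley_setup =
  fixes G :: "('a, 'c) monoid_scheme" and A :: "'a set"
    and L :: "'a list set" and \<psi> :: "'a list \<Rightarrow> 'a"
  assumes grp: "group G" and finA: "finite A" and AG: "A \<subseteq> carrier G"
    and gen: "generate G A = carrier G"
    and car: "cayley_automatic_rep G A L \<psi>"
begin

abbreviation "S \<equiv> sym_gens G A"
abbreviation "ii \<equiv> the_inv_into L \<psi>"

lemma SG: "S \<subseteq> carrier G" using sym_gens_carrier[OF grp AG] .
lemma finS: "finite S" using finA by (simp add: sym_gens_def)
lemma bij: "bij_betw \<psi> L (carrier G)" using car by (simp add: cayley_automatic_rep_def)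
lemma Lsub: "L \<subseteq> lists S" using car by (simp add: cayley_automatic_rep_def regular_lang_def)
lemma iL: "g \<in> carrier G \<Longrightarrow> ii g \<in> L"
  using bij_betw_the_inv_into[OF bij] by (auto simp: bij_betw_def)
lemma psi_i: "g \<in> carrier G \<Longrightarrow> \<psi> (ii g) = g"
  using f_the_inv_into_f_bij_betw[OF bij] by blast
lemma psiL: "w \<in> L \<Longrightarrow> \<psi> w \<in> carrier G" using bij by (auto simp: bij_betw_def)

lemma mclosed: "x \<in> carrier G \<Longrightarrow> y \<in> carrier G \<Longrightarrow> x \<otimes>\<^bsub>G\<^esub> y \<in> carrier G"
  using grp by (simp add: group.is_monoid monoid.m_closed)

lemma exC: "\<exists>C. \<forall>g\<in>carrier G. \<forall>s\<in>S. length (ii (g \<otimes>\<^bsub>G\<^esub> s)) \<le> length (ii g) + C"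
proof -
  have "\<forall>a\<in>A. \<exists>N. \<forall>g\<in>carrier G.
     length (ii (g \<otimes>\<^bsub>G\<^esub> a)) \<le> length (ii g) + N \<and>
     length (ii g) \<le> length (ii (g \<otimes>\<^bsub>G\<^esub> a)) + N"
    using rep_bound[OF grp car _ AG] by blast
  then obtain Nf where Nf: "\<forall>a\<in>A. \<forall>g\<in>carrier G.
     length (ii (g \<otimes>\<^bsub>G\<^esub> a)) \<le> length (ii g) + Nf a \<and>
     length (ii g) \<le> length (ii (g \<otimes>\<^bsub>G\<^esub> a)) + Nf a"
    by (rule bchoice[THEN exE])
  have le: "a \<in> A \<Longrightarrow> Nf a \<le> sum Nf A" for a using finA by (intro member_le_sum) auto
  show ?thesis
  proof (intro exI[of _ "sum Nf A"] ballI)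
    fix g s assume g: "g \<in> carrier G" and s: "s \<in> S"
    show "length (ii (g \<otimes>\<^bsub>G\<^esub> s)) \<le> length (ii g) + sum Nf A"
    proof (cases "s \<in> A")
      case True then show ?thesis using Nf g le[of s] by fastforce
    next
      case False
      then obtain a where a: "a \<in> A" "s = inv\<^bsub>G\<^esub> a" using s by (auto simp: sym_gens_def)
      have aG: "a \<in> carrier G" using a AG by auto
      have sG: "s \<in> carrier G" using s SG by auto
      have h: "g \<otimes>\<^bsub>G\<^esub> s \<in> carrier G" using mclosed g sG by blast
      have "(g \<otimes>\<^bsub>G\<^esub> s) \<otimes>\<^bsub>G\<^esub> a = g" using grp g aG a(2)
        by (simp add: group.inv_closed group.l_inv group.is_monoid monoid.m_assoc monoid.r_one)
      then have "length (ii (g \<otimes>\<^bsub>G\<^esub> s)) \<le> length (ii g) + Nf a" using Nf a(1) h by metis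
      then show ?thesis using le[OF a(1)] by simp
    qed
  qed
qed


lemma exUpper: "\<exists>l2::real. l2 > 0 \<and> (\<forall>g\<in>carrier G. word_len G A g \<ge> 1 \<longrightarrow>
   real (length (ii g)) \<le> l2 * real (word_len G A g))"
proof -
  obtain C where C: "\<forall>g\<in>carrier G. \<forall>s\<in>S. length (ii (g \<otimes>\<^bsub>G\<^esub> s)) \<le> length (ii g) + C"
    using exC by blast
  define K where "K = length (ii \<one>\<^bsub>G\<^esub>)"
  have ind: "w \<in> lists S \<Longrightarrow> length (ii (evalw G w)) \<le> K + C * length w" for w
  proof (induction w rule: rev_induct)
    case Nil then show ?case by (simp add: evalw_def K_def)
  next
    case (snoc s w)
    have wS: "set w \<subseteq> carrier G" and sS: "s \<in> S" using snoc.prems SG by auto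
    have sG: "s \<in> carrier G" using sS SG by auto
    have e: "evalw G (w @ [s]) = evalw G w \<otimes>\<^bsub>G\<^esub> s"
      using evalw_append[OF grp wS] sG evalw_single[OF grp sG] by simp
    have "length (ii (evalw G w \<otimes>\<^bsub>G\<^esub> s)) \<le> length (ii (evalw G w)) + C"
      using C evalw_carrier[OF grp wS] sS by blast
    then show ?case using e snoc by simp
  qed
  show ?thesis
  proof (intro exI[of _ "real (K + C + 1)"] conjI ballI impI)
    fix g assume g: "g \<in> carrier G" and w1: "1 \<le> word_len G A g"
    obtain w where w: "w \<in> lists S" "length w = word_len G A g" "evalw G w = g"
      using word_len_ex[OF grp AG gen g] by blast
    have "length (ii g) \<le> K + C * word_len G A g" using ind[OF w(1)] w by simp
    also have "\<dots> \<le> (K + C + 1) * word_len G A g"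
    proof -
      have "K \<le> K * word_len G A g" using w1 by simp
      then show ?thesis by (simp add: distrib_right trans_le_add2)
    qed
    finally show "real (length (ii g)) \<le> real (K + C + 1) * real (word_len G A g)"
      by (simp only: of_nat_mult[symmetric] of_nat_le_iff)
  qed simp
qed

lemma ball_fin: "finite (ball_n G A n)"
proof -
  have "ball_n G A n \<subseteq> evalw G ` {w. set w \<subseteq> S \<and> length w \<le> n}"
  proof
    fix g assume "g \<in> ball_n G A n"
    then have g: "g \<in> carrier G" "word_len G A g \<le> n" by (auto simp: ball_n_def)
    obtain w where w: "w \<in> lists S" "length w = word_len G A g" "evalw G w = g"
      using word_len_ex[OF grp AG gen g(1)] by blast
    then show "g \<in> evalw G ` {w. set w \<subseteq> S \<and> length w \<le> n}" using g by auto
  qed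
  moreover have "finite {w. set w \<subseteq> S \<and> length w \<le> n}" using finite_lists_length_le[OF finS] .
  ultimately show ?thesis using finite_surj by blast
qed

lemma one_ball: "\<one>\<^bsub>G\<^esub> \<in> ball_n G A n"
proof -
  have "word_len G A (evalw G []) \<le> 0" using word_len_le[OF grp AG gen, of "[]"] by simp
  then show ?thesis using grp by (simp add: ball_n_def evalw_def group.is_monoid monoid.one_closed)
qed


lemma main_loc:
  assumes eg: "exp_growth G A"
  shows "\<exists>l1 l2::real. l1 > 0 \<and> l2 > 0 \<and>
     (let Q = (\<lambda>n. {g \<in> ball_n G A n.
                 l1 * real (word_len G A g) \<le> real (length (the_inv_into L \<psi> g)) \<and>
                 real (length (the_inv_into L \<psi> g)) \<le> l2 * real (word_len G A g)})
      in ((\<lambda>n. real (card (Q n)) / real (card (ball_n G A n))) \<longlonglongrightarrow> 1) \<and>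
         (\<forall>n. \<forall>g \<in> Q n. let w = the_inv_into L \<psi> g in
            real (word_dist G A (evalw G w) (\<psi> w)) \<le> (1 + 1 / l1) * real (length w)))"
proof -
  obtain c :: real where c1: "c > 1" and ev: "\<forall>\<^sub>F n in sequentially. real (card (ball_n G A n)) \<ge> c ^ n"
    using eg unfolding exp_growth_def by blast
  obtain l2 :: real where l2: "l2 > 0" and up: "\<forall>g\<in>carrier G. word_len G A g \<ge> 1 \<longrightarrow>
     real (length (ii g)) \<le> l2 * real (word_len G A g)" using exUpper by blast
  define k :: nat where "k = card S + 2"
  define l1 :: real where "l1 = ln c / (2 * ln (real k))"
  have k2: "real k \<ge> 2" unfolding k_def by simp
  have lnk: "ln (real k) > 0" using k2 by simp
  have l1: "l1 > 0" unfolding l1_def using c1 lnk by simp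
  define sc where "sc = sqrt c"
  have sc1: "sc > 1" using c1 unfolding sc_def by simp
  have kl1: "real k powr l1 = sc"
  proof -
    have "real k powr l1 = exp (l1 * ln (real k))" using k2 by (simp add: powr_def)
    also have "l1 * ln (real k) = (1/2) * ln c" unfolding l1_def using lnk by simp
    also have "exp ((1/2) * ln c) = c powr (1/2)" using c1 by (simp add: powr_def)
    also have "\<dots> = sc" unfolding sc_def using c1 by (simp add: powr_half_sqrt)
    finally show ?thesis .
  qed
  define Q where "Q = (\<lambda>n. {g \<in> ball_n G A n.
                 l1 * real (word_len G A g) \<le> real (length (the_inv_into L \<psi> g)) \<and>
                 real (length (the_inv_into L \<psi> g)) \<le> l2 * real (word_len G A g)})"
  define B where "B = ball_n G A"
  have QB: "Q n \<subseteq> B n" for n unfolding Q_def B_def by auto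
  have finB: "finite (B n)" for n unfolding B_def by (rule ball_fin)
  have Bpos: "card (B n) \<ge> 1" for n
    using finB[of n] one_ball[of n] unfolding B_def by (auto simp: Suc_le_eq card_gt_0_iff)
  have diff: "real (card (B n - Q n)) \<le> 1 + sc ^ n" for n
  proof -
    define m where "m = nat \<lfloor>l1 * real n\<rfloor>"
    define W where "W = {w. set w \<subseteq> S \<and> length w \<le> m}"
    have sub: "B n - Q n \<subseteq> insert \<one>\<^bsub>G\<^esub> (\<psi> ` W)"
    proof
      fix g assume gBQ: "g \<in> B n - Q n"
      then have g: "g \<in> carrier G" "word_len G A g \<le> n" by (auto simp: B_def ball_n_def)
      show "g \<in> insert \<one>\<^bsub>G\<^esub> (\<psi> ` W)"
      proof (cases "word_len G A g = 0")
        case True then show ?thesis using word_len_0[OF grp AG gen g(1)] by simp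
      next
        case False
        then have "real (length (ii g)) \<le> l2 * real (word_len G A g)" using up g by simp
        then have lt: "real (length (ii g)) < l1 * real (word_len G A g)"
          using gBQ unfolding Q_def B_def by auto
        also have "\<dots> \<le> l1 * real n" using g(2) l1 by simp
        finally have "length (ii g) \<le> m" unfolding m_def by linarith
        moreover have "ii g \<in> lists S" using iL[OF g(1)] Lsub by auto
        ultimately have "ii g \<in> W" unfolding W_def by auto
        then have "\<psi> (ii g) \<in> \<psi> ` W" by (rule imageI)
        then show ?thesis using psi_i[OF g(1)] by simp
      qed
    qed
    have finW: "finite W" unfolding W_def using finite_lists_length_le[OF finS] .
    have "card (B n - Q n) \<le> card (insert \<one>\<^bsub>G\<^esub> (\<psi> ` W))"
      using sub finW by (intro card_mono) auto
    also have "\<dots> \<le> Suc (card (\<psi> ` W))" by (rule card_insert_le_m1) (auto intro: card_insert_le) 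
    also have "\<dots> \<le> Suc (card W)" using card_image_le[OF finW] by simp
    also have "card W = (\<Sum>i\<le>m. card S ^ i)" unfolding W_def by (rule card_lists_length_le[OF finS])
    also have "\<dots> \<le> (card S + 1) ^ m" by (rule sum_pow_le)
    also have "\<dots> \<le> k ^ m" unfolding k_def by (rule power_mono) auto
    finally have "real (card (B n - Q n)) \<le> real (Suc (k ^ m))" by (simp only: of_nat_le_iff)
    then have c1': "real (card (B n - Q n)) \<le> 1 + real k ^ m" by simp
    have "real k ^ m = real k powr real m" using k2 by (simp add: powr_realpow)
    also have "\<dots> \<le> real k powr (l1 * real n)"
      using k2 l1 by (intro powr_mono) (auto simp: m_def)
    also have "\<dots> = (real k powr l1) powr real n" by (simp add: powr_powr)
    also have "\<dots> = sc ^ n" using kl1 sc1 by (simp add: powr_realpow)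
    finally show ?thesis using c1' by simp
  qed
  have lim: "(\<lambda>n. real (card (Q n)) / real (card (B n))) \<longlonglongrightarrow> 1"
  proof (rule tendsto_sandwich)
    show "\<forall>\<^sub>F n in sequentially. real (card (Q n)) / real (card (B n)) \<le> 1"
    proof (rule always_eventually, rule allI)
      fix n
      have "card (Q n) \<le> card (B n)" using card_mono[OF finB QB] .
      then show "real (card (Q n)) / real (card (B n)) \<le> 1" using Bpos[of n] by simp
    qed
    show "\<forall>\<^sub>F n in sequentially. 1 - ((1/c)^n + (sc/c)^n) \<le> real (card (Q n)) / real (card (B n))"
      using ev
    proof eventually_elim
      case (elim n)
      have cn: "c ^ n > 0" using c1 by simp
      have b: "real (card (B n)) = real (card (Q n)) + real (card (B n - Q n))"
        using card_Diff_subset[OF finite_subset[OF QB finB] QB] card_mono[OF finB QB]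
        by (simp add: of_nat_diff)
      have bpos: "real (card (B n)) > 0" using Bpos[of n] by simp
      have "real (card (B n - Q n)) / real (card (B n)) \<le> (1 + sc ^ n) / c ^ n"
        using diff[of n] elim cn bpos unfolding B_def by (intro frac_le) auto
      also have "\<dots> = (1/c)^n + (sc/c)^n" by (simp add: add_divide_distrib power_divide)
      finally have h: "real (card (B n - Q n)) / real (card (B n)) \<le> (1/c)^n + (sc/c)^n" .
      have "real (card (Q n)) / real (card (B n)) = 1 - real (card (B n - Q n)) / real (card (B n))"
        using b bpos by (simp add: field_simps)
      then show ?case using h by simp
    qed
    have "sc < c"
    proof -
      have "c = sc * sc" unfolding sc_def using c1 by simp
      then show ?thesis using sc1 by simp
    qed
    then have "norm (sc / c) < 1" using sc1 c1 by simp
    moreover have "norm (1 / c) < 1" using c1 by simp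
    ultimately have "(\<lambda>n. (1/c)^n + (sc/c)^n) \<longlonglongrightarrow> 0 + 0"
      by (intro tendsto_add LIMSEQ_power_zero)
    then have "(\<lambda>n. 1 - ((1/c)^n + (sc/c)^n)) \<longlonglongrightarrow> 1 - (0 + 0)"
      by (intro tendsto_diff tendsto_const)
    then show "(\<lambda>n. 1 - ((1/c)^n + (sc/c)^n)) \<longlonglongrightarrow> 1" by simp
    show "(\<lambda>n. 1) \<longlonglongrightarrow> (1::real)" by simp
  qed
  have second: "\<forall>n. \<forall>g \<in> Q n. let w = the_inv_into L \<psi> g in
            real (word_dist G A (evalw G w) (\<psi> w)) \<le> (1 + 1 / l1) * real (length w)"
  proof (intro allI ballI)
    fix n g assume gQ: "g \<in> Q n"
    then have g: "g \<in> carrier G" and low: "l1 * real (word_len G A g) \<le> real (length (ii g))"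
      unfolding Q_def by (auto simp: ball_n_def)
    define w where "w = ii g"
    have wS: "w \<in> lists S" using iL[OF g] Lsub unfolding w_def by auto
    have wG: "set w \<subseteq> carrier G" using wS SG by auto
    have ew: "evalw G w \<in> carrier G" using evalw_carrier[OF grp wG] .
    have iew: "inv\<^bsub>G\<^esub> (evalw G w) \<in> carrier G" using ew grp by (simp add: group.inv_closed)
    have "word_dist G A (evalw G w) (\<psi> w) = word_len G A (inv\<^bsub>G\<^esub> (evalw G w) \<otimes>\<^bsub>G\<^esub> g)"
      unfolding word_dist_def w_def using psi_i[OF g] by simp
    also have "\<dots> \<le> word_len G A (inv\<^bsub>G\<^esub> (evalw G w)) + word_len G A g"
      by (rule word_len_mult[OF grp AG gen iew g])
    also have "\<dots> \<le> word_len G A (evalw G w) + word_len G A g"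
      using word_len_inv[OF grp AG gen ew] by simp
    also have "\<dots> \<le> length w + word_len G A g" using word_len_le[OF grp AG gen wS] by simp
    finally have d: "real (word_dist G A (evalw G w) (\<psi> w)) \<le> real (length w) + real (word_len G A g)"
      by (simp only: of_nat_add[symmetric] of_nat_le_iff)
    have "real (word_len G A g) \<le> real (length w) / l1" using low l1 unfolding w_def
      by (simp add: pos_le_divide_eq mult.commute)
    then have "real (word_dist G A (evalw G w) (\<psi> w)) \<le> (1 + 1 / l1) * real (length w)"
      using d by (simp add: algebra_simps)
    then show "let w = the_inv_into L \<psi> g in
            real (word_dist G A (evalw G w) (\<psi> w)) \<le> (1 + 1 / l1) * real (length w)"
      unfolding w_def Let_def .
  qed
  have "((\<lambda>n. real (card (Q n)) / real (card (ball_n G A n))) \<longlonglongrightarrow> 1) \<and> (\<forall>n. \<forall>g \<in> Q n. let w = the_inv_into L \<psi> g in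
            real (word_dist G A (evalw G w) (\<psi> w)) \<le> (1 + 1 / l1) * real (length w))"
    using lim second unfolding B_def by (rule conjI)
  then have "let Q = (\<lambda>n. {g \<in> ball_n G A n.
                 l1 * real (word_len G A g) \<le> real (length (the_inv_into L \<psi> g)) \<and>
                 real (length (the_inv_into L \<psi> g)) \<le> l2 * real (word_len G A g)})
      in ((\<lambda>n. real (card (Q n)) / real (card (ball_n G A n))) \<longlonglongrightarrow> 1) \<and>
         (\<forall>n. \<forall>g \<in> Q n. let w = the_inv_into L \<psi> g in
            real (word_dist G A (evalw G w) (\<psi> w)) \<le> (1 + 1 / l1) * real (length w))"
    unfolding Q_def Let_def .
  then show ?thesis by (intro exI[of _ l1] exI[of _ l2] conjI l1 l2)
qed

end
theorem mainTheorem13: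
  fixes G :: "('a, 'c) monoid_scheme" and A :: "'a set"
    and L :: "'a list set" and \<psi> :: "'a list \<Rightarrow> 'a"
  assumes "group G" and "finite A" and "A \<subseteq> carrier G"
    and "generate G A = carrier G"
    and "exp_growth G A"
    and "cayley_automatic_rep G A L \<psi>"
  shows "\<exists>l1 l2::real. l1 > 0 \<and> l2 > 0 \<and>
     (let Q = (\<lambda>n. {g \<in> ball_n G A n.
                 l1 * real (word_len G A g) \<le> real (length (the_inv_into L \<psi> g)) \<and>
                 real (length (the_inv_into L \<psi> g)) \<le> l2 * real (word_len G A g)})
      in ((\<lambda>n. real (card (Q n)) / real (card (ball_n G A n))) \<longlonglongrightarrow> 1) \<and>
         (\<forall>n. \<forall>g \<in> Q n. let w = the_inv_into L \<psi> g in
            real (word_dist G A (evalw G w) (\<psi> w)) \<le> (1 + 1 / l1) * real (length w)))"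
  by (rule cayley_setup.main_loc[OF cayley_setup.intro[OF assms(1,2,3,4,6)] assms(5)])

end
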